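(* Let $\mathcal M$ be a finite polyptych lattice over $F$ and let $p\in \mathrm{Sp}(\mathcal M)$. Then $p$ is linear on every cone of $\Sigma(\mathcal M)$: for every $\mathcal C\in\Sigma(\mathcal M)$ and every $\alpha\in I$, the map $p\circ\pi_\alpha^{-1}$ restricted to $\pi_\alpha(\mathcal C)\cap M_\alpha$ is the restriction of an $F$-linear map $M_\alpha\to F$. Moreover, for every $F'$ with $F\subseteq F'\subseteq\mathbb R$, $p$ extends to a (continuous) function on $\mathcal M_{F'}$ which is $F'$-linear on each cone of $\Sigma(\mathcal M)$, and this extension lies in $\mathrm{Sp}_{F'}(\mathcal M)$.
   Context: Fix a subring $F$ with $\mathbb Z\subseteq F\subseteq\mathbb R$. A map $\psi:M\to M'$ between finite-rank free $F$-modules is piecewise $F$-linear if it is (the restriction of) a continuous map and there is a complete fan of $F$-rational polyhedral cones in $M\otimes_F\mathbb R$ such that $\psi|_{C\cap M}$ is $F$-linear for every cone $C$. A polyptych lattice of rank $r$ over $F$ is a collection $\{M_\alpha\}_{\alpha\in I}$ of free $F$-modules of rank $r$ with piecewise $F$-linear maps (mutations) $\mu_{\alpha,\beta}:M_\alpha\to M_\beta$ for all $\alpha,\beta\in I$ such that $\mu_{\alpha,\alpha}=\mathrm{id}$, $\mu_{\alpha,\beta}=\mu_{\beta,\alpha}^{-1}$ and $\mu_{\beta,\gamma}\circ\mu_{\alpha,\beta}=\mu_{\alpha,\gamma}$; it is finite if $I$ is finite. Its set of elements, also denoted $\mathcal M$, is $\bigsqcup_\alpha M_\alpha$ modulo $m_\alpha\sim\mu_{\alpha,\beta}(m_\alpha)$,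 and $\pi_\alpha:\mathcal M\to M_\alpha$ sends a class to its unique representative in $M_\alpha$. For $F\subseteq F'\subseteq \mathbb R$, $\mathcal M_{F'}$ is the polyptych lattice with charts $M_\alpha\otimes_FF'$ and the natural extensions of the mutations (in particular $\mathcal M_{\mathbb R}$). Write $m+_\alpha m':=\pi_\alpha^{-1}(\pi_\alpha(m)+\pi_\alpha(m'))$, and for $\lambda\in F_{\ge0}$, $\lambda m:=\pi_\alpha^{-1}(\lambda\pi_\alpha(m))$ (independent of $\alpha$). For finite $\mathcal M$, the PL fan $\Sigma(\mathcal M)$: fix $\alpha$, let $\Sigma(\mathcal M,\alpha)$ be the common refinement, over $\beta\in I$, of the minimal fans in $M_\alpha\otimes\mathbb R$ on whose cones $\mu_{\alpha,\beta}$ is linear; $\Sigma(\mathcal M)=\{\pi_\alpha^{-1}(C): C\in\Sigma(\mathcal M,\alpha)\}$ (independent of $\alpha$). A point of $\mathcal M$ is a function $p:\mathcal M\to F$ with $p(m)+p(m')=\min_{\alpha\in I}p(m+_\alpha m')$ for all $m,m'\in\mathcal M$ and $p(\lambda m)=\lambda p(m)$ for all $\lambda\in F_{\ge0}$; $\mathrm{Sp}(\mathcal M)$ is the set of points and $\mathrm{Sp}_{F'}(\mathcal M)$ the set of points of $\mathcal M_{F'}$. *)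

theory Defs
  imports "HOL-Analysis.Analysis"
begin

definition real_subring :: "real set \<Rightarrow> bool" where
  "real_subring F \<longleftrightarrow> \<int> \<subseteq> F \<and> (\<forall>x\<in>F. \<forall>y\<in>F. x + y \<in> F \<and> x * y \<in> F \<and> - x \<in> F)"

text \<open>The chart F^r, realised inside R^r (r = CARD('n)).\<close>
definition Fvec :: "real set \<Rightarrow> (real^'n) set" where
  "Fvec F = {x. \<forall>i. x $ i \<in> F}"

definition Frational_cone :: "real set \<Rightarrow> (real^'n) set \<Rightarrow> bool" where
  "Frational_cone F C \<longleftrightarrow> (\<exists>V. finite V \<and> V \<subseteq> Fvec F \<and>
      C = {x. \<exists>t. (\<forall>v\<in>V. t v \<ge> 0) \<and> x = (\<Sum>v\<in>V. t v *\<^sub>R v)})"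

definition Ffan :: "real set \<Rightarrow> (real^'n) set set \<Rightarrow> bool" where
  "Ffan F S \<longleftrightarrow> finite S \<and> (\<forall>C\<in>S. Frational_cone F C) \<and>
     (\<forall>C\<in>S. \<forall>G. G face_of C \<and> G \<noteq> {} \<longrightarrow> G \<in> S) \<and>
     (\<forall>C\<in>S. \<forall>D\<in>S. (C \<inter> D) face_of C \<and> (C \<inter> D) face_of D)"

definition complete_fan :: "real set \<Rightarrow> (real^'n) set set \<Rightarrow> bool" where
  "complete_fan F S \<longleftrightarrow> Ffan F S \<and> \<Union>S = UNIV"

definition linear_on_cone :: "real set \<Rightarrow> (real^'n \<Rightarrow> real^'n) \<Rightarrow> (real^'n) set \<Rightarrow> bool" where
  "linear_on_cone F f C \<longleftrightarrow> (\<exists>A. linear A \<and> (\<forall>x\<in>Fvec F. A x \<in> Fvec F) \<and> (\<forall>x\<in>C. f x = A x))"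

text \<open>Piecewise F-linear map (given through its natural extension to the real span).\<close>
definition pw_linear :: "real set \<Rightarrow> (real^'n \<Rightarrow> real^'n) \<Rightarrow> bool" where
  "pw_linear F f \<longleftrightarrow> continuous_on UNIV f \<and>
     (\<exists>S. complete_fan F S \<and> (\<forall>C\<in>S. linear_on_cone F f C))"

definition polyptych :: "real set \<Rightarrow> ('i::finite \<Rightarrow> 'i \<Rightarrow> real^'n \<Rightarrow> real^'n) \<Rightarrow> bool" where
  "polyptych F \<mu> \<longleftrightarrow> real_subring F \<and> (\<forall>a b. pw_linear F (\<mu> a b)) \<and>
     (\<forall>a. \<forall>x\<in>Fvec F. \<mu> a a x = x) \<and>
     (\<forall>a b. \<forall>x\<in>Fvec F. \<mu> b a (\<mu> a b x) = x) \<and>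
     (\<forall>a b c. \<forall>x\<in>Fvec F. \<mu> b c (\<mu> a b x) = \<mu> a c x)"

text \<open>Elements of M_K: a class is represented by its family of chart representatives
  (pi_a m = m a).\<close>
definition elems :: "real set \<Rightarrow> ('i::finite \<Rightarrow> 'i \<Rightarrow> real^'n \<Rightarrow> real^'n) \<Rightarrow> ('i \<Rightarrow> real^'n) set" where
  "elems K \<mu> = {m. (\<forall>a. m a \<in> Fvec K) \<and> (\<forall>a b. m b = \<mu> a b (m a))}"

definition pinv :: "('i::finite \<Rightarrow> 'i \<Rightarrow> real^'n \<Rightarrow> real^'n) \<Rightarrow> 'i \<Rightarrow> real^'n \<Rightarrow> ('i \<Rightarrow> real^'n)" where
  "pinv \<mu> a x = (\<lambda>b. \<mu> a b x)"

definition padd :: "('i::finite \<Rightarrow> 'i \<Rightarrow> real^'n \<Rightarrow> real^'n) \<Rightarrow> 'i \<Rightarrow> ('i \<Rightarrow> real^'n) \<Rightarrow> ('i \<Rightarrow> real^'n) \<Rightarrow> ('i \<Rightarrow> real^'n)" where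
  "padd \<mu> a m m' = pinv \<mu> a (m a + m' a)"

definition pscale :: "('i::finite \<Rightarrow> 'i \<Rightarrow> real^'n \<Rightarrow> real^'n) \<Rightarrow> 'i \<Rightarrow> real \<Rightarrow> ('i \<Rightarrow> real^'n) \<Rightarrow> ('i \<Rightarrow> real^'n)" where
  "pscale \<mu> a l m = pinv \<mu> a (l *\<^sub>R m a)"

text \<open>Points of M_K (K = F gives Sp(M), K = F' gives Sp_{F'}(M)).\<close>
definition Sp :: "real set \<Rightarrow> ('i::finite \<Rightarrow> 'i \<Rightarrow> real^'n \<Rightarrow> real^'n) \<Rightarrow> (('i \<Rightarrow> real^'n) \<Rightarrow> real) set" where
  "Sp K \<mu> = {p. (\<forall>m\<in>elems K \<mu>. p m \<in> K) \<and>
      (\<forall>m\<in>elems K \<mu>. \<forall>m'\<in>elems K \<mu>. p m + p m' = Min (range (\<lambda>a. p (padd \<mu> a m m')))) \<and>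
      (\<forall>l\<in>K. l \<ge> 0 \<longrightarrow> (\<forall>m\<in>elems K \<mu>. \<forall>a. p (pscale \<mu> a l m) = l * p m))}"

text \<open>K-linear functional K^r \<rightarrow> K (only its values on K^r matter).\<close>
definition Klinear_functional :: "real set \<Rightarrow> (real^'n \<Rightarrow> real) \<Rightarrow> bool" where
  "Klinear_functional K l \<longleftrightarrow> (\<forall>x\<in>Fvec K. l x \<in> K) \<and>
     (\<forall>x\<in>Fvec K. \<forall>y\<in>Fvec K. l (x + y) = l x + l y) \<and>
     (\<forall>c\<in>K. \<forall>x\<in>Fvec K. l (c *\<^sub>R x) = c * l x)"

definition refines :: "(real^'n) set set \<Rightarrow> (real^'n) set set \<Rightarrow> bool" where
  "refines S S' \<longleftrightarrow> (\<forall>C\<in>S. \<exists>D\<in>S'. C \<subseteq> D)"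

definition linearity_fan :: "real set \<Rightarrow> (real^'n \<Rightarrow> real^'n) \<Rightarrow> (real^'n) set set \<Rightarrow> bool" where
  "linearity_fan F f S \<longleftrightarrow> complete_fan F S \<and> (\<forall>C\<in>S. linear_on_cone F f C)"

definition minimal_fan :: "real set \<Rightarrow> (real^'n \<Rightarrow> real^'n) \<Rightarrow> (real^'n) set set \<Rightarrow> bool" where
  "minimal_fan F f S \<longleftrightarrow> linearity_fan F f S \<and>
     (\<forall>S'. linearity_fan F f S' \<and> refines S S' \<longrightarrow> S' = S)"

definition common_refinement :: "('i::finite \<Rightarrow> (real^'n) set set) \<Rightarrow> (real^'n) set set" where
  "common_refinement S = {(\<Inter>b. c b) | c. \<forall>b. c b \<in> S b}"

text \<open>Sigma(M, a0): cones in chart a0 (for any choice of the minimal fans).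
  The cone pi_a0^{-1}(C) of Sigma(M) is represented by the pair (a0, C).\<close>
definition Sigma_chart :: "real set \<Rightarrow> ('i::finite \<Rightarrow> 'i \<Rightarrow> real^'n \<Rightarrow> real^'n) \<Rightarrow> 'i \<Rightarrow> (real^'n) set set" where
  "Sigma_chart F \<mu> a0 = {C. \<exists>S. (\<forall>b. minimal_fan F (\<mu> a0 b) (S b)) \<and> C \<in> common_refinement S}"

definition linear_on_PLcone :: "real set \<Rightarrow> ('i::finite \<Rightarrow> 'i \<Rightarrow> real^'n \<Rightarrow> real^'n) \<Rightarrow> (('i \<Rightarrow> real^'n) \<Rightarrow> real) \<Rightarrow> 'i \<Rightarrow> (real^'n) set \<Rightarrow> bool" where
  "linear_on_PLcone K \<mu> q a0 C \<longleftrightarrow> (\<forall>a. \<exists>l. Klinear_functional K l \<and>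
      (\<forall>m\<in>elems K \<mu>. m a0 \<in> C \<longrightarrow> q m = l (m a)))"

end

theory Submission imports Defs begin

lemma rs_0: "real_subring F \<Longrightarrow> 0 \<in> F"
  unfolding real_subring_def by (metis Ints_0 subsetD)
lemma rs_1: "real_subring F \<Longrightarrow> 1 \<in> F"
  unfolding real_subring_def by (metis Ints_1 subsetD)
lemma rs_add: "real_subring F \<Longrightarrow> x \<in> F \<Longrightarrow> y \<in> F \<Longrightarrow> x + y \<in> F"
  unfolding real_subring_def by blast
lemma rs_mult: "real_subring F \<Longrightarrow> x \<in> F \<Longrightarrow> y \<in> F \<Longrightarrow> x * y \<in> F"
  unfolding real_subring_def by blast
lemma rs_neg: "real_subring F \<Longrightarrow> x \<in> F \<Longrightarrow> - x \<in> F"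
  unfolding real_subring_def by blast
lemma rs_diff: "real_subring F \<Longrightarrow> x \<in> F \<Longrightarrow> y \<in> F \<Longrightarrow> x - y \<in> F"
  using rs_add rs_neg by (metis diff_conv_add_uminus)
lemma rs_Ints: "real_subring F \<Longrightarrow> x \<in> \<int> \<Longrightarrow> x \<in> F"
  unfolding real_subring_def by blast
lemma rs_sum: "real_subring F \<Longrightarrow> (\<And>i. i \<in> I \<Longrightarrow> g i \<in> F) \<Longrightarrow> sum g I \<in> F"
proof (induction I rule: infinite_finite_induct)
  case (infinite A) then show ?case by (simp add: rs_0)
next
  case empty then show ?case by (simp add: rs_0)
next
  case (insert x A) then show ?case by (simp add: rs_add)
qed

definition Zvec :: "(real^'n) set" where "Zvec = {x. \<forall>i. x $ i \<in> \<int>}"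

lemma Zvec_Fvec: "real_subring F \<Longrightarrow> x \<in> Zvec \<Longrightarrow> x \<in> Fvec F"
  unfolding Zvec_def Fvec_def using rs_Ints by blast
lemma Fvec_add: "real_subring F \<Longrightarrow> x \<in> Fvec F \<Longrightarrow> y \<in> Fvec F \<Longrightarrow> x + y \<in> Fvec F"
  unfolding Fvec_def by (simp add: rs_add)
lemma Fvec_neg: "real_subring F \<Longrightarrow> x \<in> Fvec F \<Longrightarrow> - x \<in> Fvec F"
  unfolding Fvec_def by (simp add: rs_neg)
lemma Fvec_diff: "real_subring F \<Longrightarrow> x \<in> Fvec F \<Longrightarrow> y \<in> Fvec F \<Longrightarrow> x - y \<in> Fvec F"
  unfolding Fvec_def by (simp add: rs_diff)
lemma Fvec_scale: "real_subring F \<Longrightarrow> c \<in> F \<Longrightarrow> x \<in> Fvec F \<Longrightarrow> c *\<^sub>R x \<in> Fvec F"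
  unfolding Fvec_def by (simp add: rs_mult)
lemma Fvec_0: "real_subring F \<Longrightarrow> 0 \<in> Fvec F"
  unfolding Fvec_def by (simp add: rs_0)
lemma Fvec_axis: "real_subring F \<Longrightarrow> axis i 1 \<in> Fvec F"
  unfolding Fvec_def axis_def by (simp add: rs_0 rs_1)
lemma Fvec_mono: "F \<subseteq> F' \<Longrightarrow> Fvec F \<subseteq> Fvec F'"
  unfolding Fvec_def by blast

lemma linear_expansion:
  fixes l :: "real^'n \<Rightarrow> real"
  assumes "linear l"
  shows "l x = (\<Sum>i\<in>UNIV. x $ i * l (axis i 1))"
proof -
  have "l x = l (\<Sum>i\<in>UNIV. x $ i *\<^sub>R axis i 1)"
    using basis_expansion[of x] by (simp add: scalar_mult_eq_scaleR)
  also have "\<dots> = (\<Sum>i\<in>UNIV. x $ i * l (axis i 1))"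
    using assms by (simp add: linear_sum linear_scale)
  finally show ?thesis .
qed

lemma linear_F_F':
  fixes l :: "real^'n \<Rightarrow> real"
  assumes "linear l" "\<forall>x\<in>Fvec F. l x \<in> F" "real_subring F" "real_subring F'" "F \<subseteq> F'"
  shows "Klinear_functional F' l"
proof -
  have val: "l x \<in> F'" if "x \<in> Fvec F'" for x
  proof -
    have "l (axis i 1) \<in> F'" for i using assms Fvec_axis by blast
    moreover have "x $ i \<in> F'" for i using that unfolding Fvec_def by blast
    ultimately show ?thesis
      unfolding linear_expansion[OF assms(1), of x] by (intro rs_sum assms(4)) (simp add: rs_mult assms(4))
  qed
  show ?thesis unfolding Klinear_functional_def
    using val assms(1) by (simp add: linear_add linear_scale)
qed


section \<open>Cones\<close>

lemma cone_sum_in: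
  assumes "convex_cone T" "finite V" "V \<subseteq> T" "\<forall>v\<in>V. t v \<ge> 0"
  shows "(\<Sum>v\<in>V. t v *\<^sub>R v) \<in> T"
  using assms(2,3,4)
proof (induction V rule: finite_induct)
  case empty then show ?case using assms(1) by (simp add: convex_cone_iff)
next
  case (insert x F) then show ?case using assms(1)
    by (simp add: convex_cone_add convex_cone_scaleR)
qed

lemma Frational_hull:
  assumes "finite V"
  shows "{x. \<exists>t. (\<forall>v\<in>V. t v \<ge> 0) \<and> x = (\<Sum>v\<in>V. t v *\<^sub>R v)} = convex_cone hull V"
    (is "?S = _")
proof (rule hull_unique[symmetric])
  show "V \<subseteq> ?S"
  proof
    fix v assume v: "v \<in> V"
    have "(\<Sum>w\<in>V. (if w = v then 1 else 0) *\<^sub>R w) = v"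
      proof -
      have "(\<Sum>w\<in>V. (if w = v then 1 else 0) *\<^sub>R w) = (\<Sum>w\<in>V. if w = v then w else 0)"
        by (rule sum.cong) auto
      also have "\<dots> = v" using assms v by (simp add: sum.delta)
      finally show ?thesis .
    qed
    then show "v \<in> ?S" by (intro CollectI exI[of _ "\<lambda>w. if w = v then 1 else 0"]) auto
  qed
  show "convex_cone ?S" unfolding convex_cone_iff
  proof (intro conjI ballI allI impI)
    show "0 \<in> ?S" by (intro CollectI exI[of _ "\<lambda>w. 0"]) auto
  next
    fix x y assume "x \<in> ?S" "y \<in> ?S"
    then obtain s t where "\<forall>v\<in>V. s v \<ge> 0" "x = (\<Sum>v\<in>V. s v *\<^sub>R v)" "\<forall>v\<in>V. t v \<ge> 0" "y = (\<Sum>v\<in>V. t v *\<^sub>R v)" by auto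
    then show "x + y \<in> ?S"
      by (intro CollectI exI[of _ "\<lambda>v. s v + t v"]) (auto simp: scaleR_add_left sum.distrib)
  next
    fix x and c :: real assume "x \<in> ?S" "0 \<le> c"
    then obtain s where "\<forall>v\<in>V. s v \<ge> 0" "x = (\<Sum>v\<in>V. s v *\<^sub>R v)" by auto
    then show "c *\<^sub>R x \<in> ?S" using \<open>0 \<le> c\<close>
      by (intro CollectI exI[of _ "\<lambda>v. c * s v"]) (auto simp: scaleR_sum_right)
  qed
  show "?S \<subseteq> T" if "V \<subseteq> T" "convex_cone T" for T
    using that cone_sum_in[OF _ assms] by auto
qed

lemma Frational_cone_props:
  assumes "Frational_cone F C"
  shows "closed C" "convex_cone C"
proof -
  obtain V where V: "finite V" "C = {x. \<exists>t. (\<forall>v\<in>V. t v \<ge> 0) \<and> x = (\<Sum>v\<in>V. t v *\<^sub>R v)}"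
    using assms unfolding Frational_cone_def by blast
  then have "C = convex_cone hull V" using Frational_hull by blast
  then show "closed C" "convex_cone C"
    using closed_convex_cone_hull[OF V(1)] by (auto simp: convex_cone_convex_cone_hull)
qed

lemma convex_cone_INT:
  assumes "\<And>b. convex_cone (d b)"
  shows "convex_cone (\<Inter>b. d b)"
  using assms unfolding convex_cone_iff by auto


section \<open>Topology\<close>

lemma open_cover_closed_interior:
  fixes U :: "'a::topological_space set"
  assumes "finite \<K>" "\<forall>K\<in>\<K>. closed K" "open U" "U \<noteq> {}" "U \<subseteq> \<Union>\<K>"
  shows "\<exists>K\<in>\<K>. U \<inter> interior K \<noteq> {}"
  using assms
proof (induction \<K> arbitrary: U rule: finite_induct)
  case empty then show ?case by simp
next
  case (insert K \<K>)
  show ?case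
  proof (cases "U \<inter> interior K = {}")
    case False then show ?thesis by (intro bexI[of _ K]) simp_all
  next
    case True
    have cK: "closed K" using insert.prems(1) by simp
    have nonempty: "U - K \<noteq> {}"
    proof
      assume "U - K = {}"
      then have "U \<subseteq> K" by (rule Diff_eq_empty_iff[THEN iffD1])
      then have "U \<subseteq> interior K" using insert.prems(2) by (rule interior_maximal)
      then have "U \<inter> interior K = U" by (rule Int_absorb2)
      then show False using True insert.prems(3) by simp
    qed
    have op: "open (U - K)" using insert.prems(2) cK by (rule open_Diff)
    have sub: "U - K \<subseteq> \<Union>\<K>" using insert.prems(4) by auto
    have "\<forall>K\<in>\<K>. closed K" using insert.prems(1) by simp
    from insert.IH[OF this op nonempty sub] obtain K' where "K' \<in> \<K>" "(U - K) \<inter> interior K' \<noteq> {}"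
      by (elim bexE)
    then show ?thesis by (intro bexI[of _ K']) auto
  qed
qed

lemma Zvec_floor_near:
  fixes y :: "real^'n"
  shows "\<exists>z\<in>Zvec. dist z y \<le> real CARD('n)"
proof -
  let ?z = "(\<chi> i. real_of_int \<lfloor>y $ i\<rfloor>) :: real^'n"
  have "?z \<in> Zvec" unfolding Zvec_def by auto
  moreover have "dist ?z y \<le> real CARD('n)"
  proof -
    have "dist ?z y = norm (?z - y)" by (simp add: dist_norm)
    also have "\<dots> \<le> (\<Sum>i\<in>UNIV. \<bar>(?z - y) $ i\<bar>)" by (rule norm_le_l1_cart)
    also have "\<dots> \<le> (\<Sum>i\<in>(UNIV::'n set). 1)"
      by (rule sum_mono) (simp, linarith)
    also have "\<dots> = real CARD('n)" by simp
    finally show ?thesis .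
  qed
  ultimately show ?thesis by blast
qed

lemma deep_point:
  fixes D :: "(real^'n) set"
  assumes conic: "\<And>c x. c \<ge> 0 \<Longrightarrow> x \<in> D \<Longrightarrow> c *\<^sub>R x \<in> D" and int: "interior D \<noteq> {}"
  shows "\<exists>z\<in>Zvec. cball z R \<subseteq> D"
proof -
  obtain w where "w \<in> interior D" using int by blast
  then obtain e where e: "e > 0" "ball w e \<subseteq> D" using mem_interior by blast
  define t where "t = (\<bar>R\<bar> + real CARD('n) + 1) / e"
  have t: "t > 0" using e by (simp add: t_def add_pos_nonneg)
  have te: "t * e = \<bar>R\<bar> + real CARD('n) + 1" using e by (simp add: t_def)
  have ball: "ball (t *\<^sub>R w) (t * e) \<subseteq> D"
  proof
    fix y assume "y \<in> ball (t *\<^sub>R w) (t * e)"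
    then have "dist (t *\<^sub>R w) y < t * e" by simp
    moreover have "dist (t *\<^sub>R w) y = t * dist w ((1/t) *\<^sub>R y)"
    proof -
      have "t *\<^sub>R w - y = t *\<^sub>R (w - (1/t) *\<^sub>R y)" using t by (simp add: algebra_simps)
      then show ?thesis using t by (simp add: dist_norm)
    qed
    ultimately have "dist w ((1/t) *\<^sub>R y) < e" using t by simp
    then have "(1/t) *\<^sub>R y \<in> D" using e by auto
    then have "t *\<^sub>R ((1/t) *\<^sub>R y) \<in> D" using conic t by (meson less_imp_le)
    moreover have "t *\<^sub>R ((1/t) *\<^sub>R y) = y" using t by simp
    ultimately show "y \<in> D" by simp
  qed
  obtain z where z: "z \<in> Zvec" "dist z (t *\<^sub>R w) \<le> real CARD('n)" using Zvec_floor_near by blast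
  have "cball z R \<subseteq> ball (t *\<^sub>R w) (t * e)"
  proof
    fix y assume "y \<in> cball z R"
    then have "dist z y \<le> R" by simp
    then have "dist (t *\<^sub>R w) y \<le> real CARD('n) + R" using z(2) dist_triangle[of "t *\<^sub>R w" y z]
      by (simp add: dist_commute)
    then show "y \<in> ball (t *\<^sub>R w) (t * e)" using te by simp
  qed
  then show ?thesis using ball z(1) by blast
qed

definition Dy :: "(real^'n) set" where "Dy = {x. \<exists>k::nat. (2^k) *\<^sub>R x \<in> Zvec}"

lemma closure_Dy: "closure (Dy :: (real^'n) set) = UNIV"
proof -
  have "x \<in> closure Dy" for x :: "real^'n"
  proof (unfold closure_approachable, intro allI impI)
    fix e :: real assume e: "e > 0"
    define M where "M = real CARD('n) + 1"
    have M: "M > 0" unfolding M_def by simp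
    have "e / M > 0" using e M by simp
    then obtain k :: nat where k: "(1/2)^k < e / M"
      using real_arch_pow_inv[of "e / M" "1/2"] by auto
    obtain z where z: "z \<in> Zvec" "dist z ((2^k) *\<^sub>R x) \<le> real CARD('n)" using Zvec_floor_near by blast
    define y where "y = (1/2^k) *\<^sub>R z"
    have "y \<in> Dy" unfolding Dy_def y_def using z(1) by (intro CollectI exI[of _ k]) simp
    have "y - x = (1/2^k) *\<^sub>R (z - (2^k) *\<^sub>R x)" unfolding y_def by (simp add: algebra_simps)
    then have d: "dist y x = (1/2)^k * dist z ((2^k) *\<^sub>R x)"
      by (simp add: dist_norm power_one_over)
    have "(1/2)^k * dist z ((2^k) *\<^sub>R x) \<le> (1/2)^k * real CARD('n)"
      using z(2) by (intro mult_left_mono) simp_all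
    also have "\<dots> < (1/2)^k * M" unfolding M_def by simp
    also have "\<dots> < (e / M) * M" using k M by (intro mult_strict_right_mono) simp_all
    also have "\<dots> = e" using M by simp
    finally have "dist y x < e" using d by simp
    then show "\<exists>y\<in>Dy. dist y x < e" using \<open>y \<in> Dy\<close> by blast
  qed
  then show ?thesis by auto
qed

lemma eq_on_Zvec_homog:
  fixes g h :: "real^'n \<Rightarrow> real"
  assumes "continuous_on UNIV g" "continuous_on UNIV h"
    "\<And>c x. c \<ge> 0 \<Longrightarrow> g (c *\<^sub>R x) = c * g x" "\<And>c x. c \<ge> 0 \<Longrightarrow> h (c *\<^sub>R x) = c * h x"
    "\<And>z. z \<in> Zvec \<Longrightarrow> g z = h z"
  shows "g = h"
proof -
  have "Dy \<subseteq> {x. g x = h x}"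
  proof
    fix x :: "real^'n" assume "x \<in> Dy"
    then obtain k :: nat where "(2^k) *\<^sub>R x \<in> Zvec" unfolding Dy_def by blast
    then have "g ((2^k) *\<^sub>R x) = h ((2^k) *\<^sub>R x)" using assms(5) by blast
    then show "x \<in> {x. g x = h x}" using assms(3,4)[of "2^k" x] by simp
  qed
  moreover have "closed {x. g x = h x}"
    using assms(1,2) by (intro closed_Collect_eq) auto
  ultimately have "closure Dy \<subseteq> {x. g x = h x}" by (rule closure_minimal)
  then show ?thesis using closure_Dy by auto
qed

lemma continuous_on_Min_fam:
  fixes g :: "'c \<Rightarrow> 'a::topological_space \<Rightarrow> 'b::linorder_topology"
  assumes "finite A" "A \<noteq> {}" "\<And>a. a \<in> A \<Longrightarrow> continuous_on S (g a)"
  shows "continuous_on S (\<lambda>x. Min ((\<lambda>a. g a x) ` A))"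
  using assms
proof (induction A rule: finite_ne_induct)
  case (singleton x) then show ?case by simp
next
  case (insert a A)
  have "continuous_on S (\<lambda>x. min (g a x) (Min ((\<lambda>a. g a x) ` A)))"
  proof (rule continuous_on_min)
    show "continuous_on S (g a)" using insert.prems by simp
    show "continuous_on S (\<lambda>x. Min ((\<lambda>a. g a x) ` A))" using insert.IH insert.prems by simp
  qed
  then show ?case using insert by simp
qed


lemma fan_cone_props:
  assumes "complete_fan F S" "C \<in> S"
  shows "closed C" "convex_cone C"
proof -
  have "Ffan F S" using assms(1) unfolding complete_fan_def by (rule conjunct1)
  then have "\<forall>C\<in>S. Frational_cone F C" unfolding Ffan_def by (elim conjE)
  then have "Frational_cone F C" using assms(2) by (rule bspec)
  then show "closed C" "convex_cone C" by (rule Frational_cone_props)+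
qed

locale PL =
  fixes F :: "real set" and \<mu> :: "'i::finite \<Rightarrow> 'i \<Rightarrow> real^'n \<Rightarrow> real^'n"
    and p :: "('i \<Rightarrow> real^'n) \<Rightarrow> real"
  assumes poly: "polyptych F \<mu>" and pt: "p \<in> Sp F \<mu>"
begin

lemma poly_parts: "real_subring F" "\<forall>a b. pw_linear F (\<mu> a b)" "\<forall>a. \<forall>x\<in>Fvec F. \<mu> a a x = x"
   "\<forall>a b. \<forall>x\<in>Fvec F. \<mu> b a (\<mu> a b x) = x" "\<forall>a b c. \<forall>x\<in>Fvec F. \<mu> b c (\<mu> a b x) = \<mu> a c x"
  using poly unfolding polyptych_def by simp_all

lemma rsF: "real_subring F" by (rule poly_parts(1))
lemma mu_id: "x \<in> Fvec F \<Longrightarrow> \<mu> a a x = x" using poly_parts(3) by simp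
lemma mu_inv: "x \<in> Fvec F \<Longrightarrow> \<mu> b a (\<mu> a b x) = x" using poly_parts(4) by simp
lemma mu_comp: "x \<in> Fvec F \<Longrightarrow> \<mu> b c (\<mu> a b x) = \<mu> a c x" using poly_parts(5) by simp
lemma mu_pw: "pw_linear F (\<mu> a b)" using poly_parts(2) by simp

definition T :: "'i \<Rightarrow> 'i \<Rightarrow> (real^'n) set set" where
  "T a b = (SOME S. linearity_fan F (\<mu> a b) S)"

lemma T_fan: "linearity_fan F (\<mu> a b) (T a b)"
proof -
  have "pw_linear F (\<mu> a b)" by (rule mu_pw)
  then have "\<exists>S. linearity_fan F (\<mu> a b) S" unfolding pw_linear_def linearity_fan_def by blast
  then show ?thesis unfolding T_def by (rule someI_ex)
qed

lemma mu_cont: "continuous_on UNIV (\<mu> a b)"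
  using mu_pw unfolding pw_linear_def by (rule conjunct1)

lemma mu_piece:
  obtains C A where "C \<in> T a b" "linear A" "\<forall>x\<in>Fvec F. A x \<in> Fvec F" "\<forall>y\<in>C. \<mu> a b y = A y" "x \<in> C" "convex_cone C"
proof -
  have fan: "complete_fan F (T a b)" "\<forall>C\<in>T a b. linear_on_cone F (\<mu> a b) C"
    using T_fan unfolding linearity_fan_def by auto
  have "x \<in> \<Union>(T a b)" using fan(1) unfolding complete_fan_def by simp
  then obtain C where C: "C \<in> T a b" "x \<in> C" by (rule UnionE)
  have "linear_on_cone F (\<mu> a b) C" using fan(2) C(1) by (rule bspec)
  then obtain A where A: "linear A" "\<forall>x\<in>Fvec F. A x \<in> Fvec F" "\<forall>y\<in>C. \<mu> a b y = A y"
    unfolding linear_on_cone_def by (elim exE conjE) 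
  have cc: "convex_cone C" using fan_cone_props(2)[OF fan(1) C(1)] .
  show ?thesis by (rule that[OF C(1) A C(2) cc])
qed

lemma mu_F: "x \<in> Fvec F \<Longrightarrow> \<mu> a b x \<in> Fvec F"
proof -
  assume x: "x \<in> Fvec F"
  obtain C A where A: "\<forall>x\<in>Fvec F. A x \<in> Fvec F" "\<forall>y\<in>C. \<mu> a b y = A y" "x \<in> C"
    by (rule mu_piece[of a b x]) 
  have "\<mu> a b x = A x" using A(2) A(3) by (rule bspec)
  moreover have "A x \<in> Fvec F" using A(1) x by (rule bspec)
  ultimately show ?thesis by simp
qed

lemma mu_homog: "c \<ge> 0 \<Longrightarrow> \<mu> a b (c *\<^sub>R x) = c *\<^sub>R \<mu> a b x"
proof -
  assume c: "c \<ge> 0"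
  obtain C A where A: "linear A" "\<forall>y\<in>C. \<mu> a b y = A y" "x \<in> C" "convex_cone C"
    by (rule mu_piece[of a b x])
  have cx: "c *\<^sub>R x \<in> C" using A(4) c A(3) by (rule convex_cone_scaleR)
  have "\<mu> a b (c *\<^sub>R x) = A (c *\<^sub>R x)" using A(2) cx by (rule bspec)
  also have "\<dots> = c *\<^sub>R A x" using A(1) by (rule linear_scale)
  also have "A x = \<mu> a b x" using A(2) A(3) by simp
  finally show ?thesis .
qed

lemma pinv_elems: "x \<in> Fvec F \<Longrightarrow> pinv \<mu> a x \<in> elems F \<mu>"
  unfolding elems_def pinv_def using mu_F mu_comp by auto

lemma elems_pinv: "m \<in> elems K \<mu> \<Longrightarrow> pinv \<mu> a (m a) = m"
  unfolding elems_def pinv_def by auto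

lemma elems_chart: "m \<in> elems K \<mu> \<Longrightarrow> m b = \<mu> a b (m a)"
  unfolding elems_def by auto

lemma elems_Fvec: "m \<in> elems K \<mu> \<Longrightarrow> m a \<in> Fvec K"
  unfolding elems_def by auto

lemma pinv_chart: "x \<in> Fvec F \<Longrightarrow> pinv \<mu> b (\<mu> a b x) = pinv \<mu> a x"
  unfolding pinv_def using mu_comp by auto

definition f :: "'i \<Rightarrow> real^'n \<Rightarrow> real" where "f a x = p (pinv \<mu> a x)"

lemma p_F: "m \<in> elems F \<mu> \<Longrightarrow> p m \<in> F" using pt unfolding Sp_def by blast

lemma p_min: "m \<in> elems F \<mu> \<Longrightarrow> m' \<in> elems F \<mu> \<Longrightarrow> p m + p m' = Min (range (\<lambda>a. p (padd \<mu> a m m')))"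
  using pt unfolding Sp_def by blast

lemma p_scale: "l \<in> F \<Longrightarrow> l \<ge> 0 \<Longrightarrow> m \<in> elems F \<mu> \<Longrightarrow> p (pscale \<mu> a l m) = l * p m"
  using pt unfolding Sp_def by blast

lemma f_F: "x \<in> Fvec F \<Longrightarrow> f a x \<in> F"
  unfolding f_def using p_F pinv_elems by blast

lemma f_homog:
  assumes "x \<in> Fvec F" "c \<in> F" "c \<ge> 0"
  shows "f a (c *\<^sub>R x) = c * f a x"
proof -
  have "pscale \<mu> a c (pinv \<mu> a x) = pinv \<mu> a (c *\<^sub>R x)"
    unfolding pscale_def using assms(1) by (simp add: pinv_def mu_id)
  moreover have "p (pscale \<mu> a c (pinv \<mu> a x)) = c * p (pinv \<mu> a x)"
    by (rule p_scale[OF assms(2,3) pinv_elems[OF assms(1)]])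
  ultimately show ?thesis unfolding f_def by simp
qed

lemma f_0: "f a 0 = 0"
proof -
  have "f a (0 *\<^sub>R 0) = 0 * f a 0" by (rule f_homog[OF Fvec_0[OF rsF] rs_0[OF rsF]]) simp
  then show ?thesis by simp
qed

lemma padd_pinv: "padd \<mu> b (pinv \<mu> a x) (pinv \<mu> a x') = pinv \<mu> b (\<mu> a b x + \<mu> a b x')"
  unfolding padd_def pinv_def by simp

lemma f_super:
  assumes "x \<in> Fvec F" "x' \<in> Fvec F"
  shows "f a x + f a x' \<le> f a (x + x')"
proof -
  have "f a x + f a x' = Min (range (\<lambda>b. p (padd \<mu> b (pinv \<mu> a x) (pinv \<mu> a x'))))"
    unfolding f_def using p_min pinv_elems assms by blast
  also have "\<dots> \<le> p (padd \<mu> a (pinv \<mu> a x) (pinv \<mu> a x'))" by (rule Min_le) auto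
  also have "\<dots> = f a (x + x')" unfolding padd_pinv f_def using assms by (simp add: mu_id)
  finally show ?thesis .
qed

definition good :: "'i \<Rightarrow> (real^'n) set \<Rightarrow> bool" where
  "good a D \<longleftrightarrow> closed D \<and> convex_cone D \<and> interior D \<noteq> {} \<and>
     (\<forall>b. \<exists>A. linear A \<and> (\<forall>x\<in>Fvec F. A x \<in> Fvec F) \<and> (\<forall>x\<in>D. \<mu> a b x = A x))"

lemma good_closed: "good a D \<Longrightarrow> closed D" unfolding good_def by (rule conjunct1)
lemma good_cc: "good a D \<Longrightarrow> convex_cone D" unfolding good_def by (drule conjunct2, rule conjunct1)
lemma good_int: "good a D \<Longrightarrow> interior D \<noteq> {}" unfolding good_def by (drule conjunct2, drule conjunct2, rule conjunct1)
lemma good_lin: "good a D \<Longrightarrow> \<exists>A. linear A \<and> (\<forall>x\<in>Fvec F. A x \<in> Fvec F) \<and> (\<forall>x\<in>D. \<mu> a b x = A x)"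
  unfolding good_def by (drule conjunct2, drule conjunct2, drule conjunct2, erule spec)

lemma good_add:
  assumes g: "good a D" and x: "x \<in> D" "x \<in> Fvec F" and x': "x' \<in> D" "x' \<in> Fvec F"
  shows "f a (x + x') = f a x + f a x'"
proof -
  have cc: "convex_cone D" using g by (rule good_cc)
  have xxD: "x + x' \<in> D" using cc x(1) x'(1) by (rule convex_cone_add)
  have xxF: "x + x' \<in> Fvec F" using rsF x(2) x'(2) by (rule Fvec_add)
  have eq: "padd \<mu> b (pinv \<mu> a x) (pinv \<mu> a x') = pinv \<mu> a (x + x')" for b
  proof -
    obtain A where A: "linear A" "\<forall>y\<in>D. \<mu> a b y = A y" using good_lin[OF g, of b] by blast
    have "\<mu> a b x + \<mu> a b x' = \<mu> a b (x + x')"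
      using A xxD x(1) x'(1) by (simp add: linear_add)
    then show ?thesis unfolding padd_pinv using pinv_chart[OF xxF] by simp
  qed
  have "f a x + f a x' = Min (range (\<lambda>b. p (padd \<mu> b (pinv \<mu> a x) (pinv \<mu> a x'))))"
    unfolding f_def by (rule p_min[OF pinv_elems[OF x(2)] pinv_elems[OF x'(2)]])
  also have "\<dots> = f a (x + x')" unfolding eq f_def by simp
  finally show ?thesis by simp
qed

end


lemma Fvec_sum: "real_subring K \<Longrightarrow> (\<And>i. i \<in> I \<Longrightarrow> g i \<in> Fvec K) \<Longrightarrow> sum g I \<in> Fvec K"
proof (induction I rule: infinite_finite_induct)
  case (infinite A) then show ?case by (simp add: Fvec_0)
next
  case empty then show ?case by (simp add: Fvec_0)
next
  case (insert x A) then show ?case by (simp add: Fvec_add)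
qed

lemma in_cball_off: "norm y \<le> R \<Longrightarrow> z + y \<in> cball z R"
  by (simp add: dist_norm)

locale GD = PL F \<mu> p for F :: "real set" and \<mu> :: "'i::finite \<Rightarrow> 'i \<Rightarrow> real^'n \<Rightarrow> real^'n"
    and p :: "('i \<Rightarrow> real^'n) \<Rightarrow> real" +
  fixes a :: 'i and D :: "(real^'n) set"
  assumes g: "good a D"
begin

lemma D_conic: "c \<ge> 0 \<Longrightarrow> x \<in> D \<Longrightarrow> c *\<^sub>R x \<in> D"
  using good_cc[OF g] convex_cone_scaleR by blast

lemma D_add: "x \<in> D \<Longrightarrow> y \<in> D \<Longrightarrow> x + y \<in> D"
  using good_cc[OF g] convex_cone_add by blast

lemma D_deep: "\<exists>z\<in>Zvec. cball z R \<subseteq> D"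
  using deep_point[OF D_conic good_int[OF g]] by blast

lemma D_wd:
  assumes "z \<in> D" "z \<in> Fvec F" "z + y \<in> D" "z + y \<in> Fvec F"
    "z' \<in> D" "z' \<in> Fvec F" "z' + y \<in> D" "z' + y \<in> Fvec F"
  shows "f a (z + y) - f a z = f a (z' + y) - f a z'"
proof -
  have "f a ((z + y) + z') = f a (z + y) + f a z'" by (rule good_add[OF g]) (use assms in auto)
  moreover have "f a ((z' + y) + z) = f a (z' + y) + f a z" by (rule good_add[OF g]) (use assms in auto)
  moreover have "(z + y) + z' = (z' + y) + z" by (simp add: algebra_simps)
  ultimately show ?thesis by simp
qed

definition zz :: "real \<Rightarrow> real^'n" where "zz R = (SOME z. z \<in> Zvec \<and> cball z R \<subseteq> D)"

lemma zz: "zz R \<in> Zvec" "cball (zz R) R \<subseteq> D"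
proof -
  have "\<exists>z. z \<in> Zvec \<and> cball z R \<subseteq> D" using D_deep by blast
  then have "zz R \<in> Zvec \<and> cball (zz R) R \<subseteq> D" unfolding zz_def by (rule someI_ex)
  then show "zz R \<in> Zvec" "cball (zz R) R \<subseteq> D" by auto
qed


definition h :: "real^'n \<Rightarrow> real" where "h y = f a (zz (norm y) + y) - f a (zz (norm y))"

lemma h_eq:
  assumes "z \<in> D" "z \<in> Fvec F" "z + y \<in> D" "y \<in> Fvec F"
  shows "h y = f a (z + y) - f a z"
proof -
  let ?z = "zz (norm y)"
  have "?z \<in> D" using zz[of "norm y"] by (meson centre_in_cball norm_ge_zero subsetD)
  moreover have "?z + y \<in> D" using zz(2)[of "norm y"] in_cball_off[of y "norm y" ?z] by blast
  moreover have "?z \<in> Fvec F" using zz(1) Zvec_Fvec rsF by blast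
  ultimately show ?thesis unfolding h_def
    using D_wd[of ?z y z] assms rsF Fvec_add by blast
qed

lemma D_0: "0 \<in> D" using good_cc[OF g] by (simp add: convex_cone_iff)

lemma h_f: "x \<in> D \<Longrightarrow> x \<in> Fvec F \<Longrightarrow> h x = f a x"
  using h_eq[OF D_0 Fvec_0[OF rsF], of x] f_0 by simp

lemma h_add:
  assumes "y \<in> Fvec F" "y' \<in> Fvec F"
  shows "h (y + y') = h y + h y'"
proof -
  let ?R = "norm y + norm y'"
  let ?z = "zz ?R"
  have zD: "?z \<in> D" using zz[of ?R] by (meson centre_in_cball add_nonneg_nonneg norm_ge_zero subsetD)
  have zF: "?z \<in> Fvec F" using zz(1) Zvec_Fvec rsF by blast
  have zyD: "?z + y \<in> D" using zz(2)[of ?R] in_cball_off[of y ?R ?z] by auto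
  have zyyD: "?z + y + y' \<in> D" using zz(2)[of ?R] in_cball_off[of "y + y'" ?R ?z] norm_triangle_ineq[of y y']
    by (auto simp: add.assoc)
  have zyF: "?z + y \<in> Fvec F" using zF assms rsF Fvec_add by blast
  have "h (y + y') = f a (?z + (y + y')) - f a ?z"
    by (rule h_eq[OF zD zF]) (use zyyD Fvec_add[OF rsF assms] in \<open>simp_all add: add.assoc\<close>)
  moreover have "h y = f a (?z + y) - f a ?z" using h_eq zD zF zyD assms by blast
  moreover have "h y' = f a (?z + y + y') - f a (?z + y)" using h_eq[of "?z + y" y'] zyD zyF zyyD assms by blast
  ultimately show ?thesis by (simp add: add.assoc)
qed

lemma h_0: "h 0 = 0"
  using h_f[OF D_0 Fvec_0[OF rsF]] f_0 by simp

lemma h_neg: "y \<in> Fvec F \<Longrightarrow> h (- y) = - h y"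
proof -
  assume y: "y \<in> Fvec F"
  have "h (y + - y) = h y + h (- y)" by (rule h_add[OF y Fvec_neg[OF rsF y]])
  then show ?thesis using h_0 by simp
qed

lemma h_scale_pos:
  assumes "y \<in> Fvec F" "c \<in> F" "c \<ge> 0"
  shows "h (c *\<^sub>R y) = c * h y"
proof -
  let ?z = "zz (norm y)"
  have zD: "?z \<in> D" using zz[of "norm y"] by (meson centre_in_cball norm_ge_zero subsetD)
  have zF: "?z \<in> Fvec F" using zz(1) Zvec_Fvec rsF by blast
  have zyD: "?z + y \<in> D" using zz(2)[of "norm y"] in_cball_off[of y "norm y" ?z] by auto
  have zyF: "?z + y \<in> Fvec F" using zF assms rsF Fvec_add by blast
  have "h (c *\<^sub>R y) = f a (c *\<^sub>R ?z + c *\<^sub>R y) - f a (c *\<^sub>R ?z)"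
  proof (rule h_eq)
    show "c *\<^sub>R ?z \<in> D" by (rule D_conic[OF assms(3) zD])
    show "c *\<^sub>R ?z \<in> Fvec F" by (rule Fvec_scale[OF rsF assms(2) zF])
    show "c *\<^sub>R y \<in> Fvec F" by (rule Fvec_scale[OF rsF assms(2) assms(1)])
    show "c *\<^sub>R ?z + c *\<^sub>R y \<in> D" using D_conic[OF assms(3) zyD] by (simp add: scaleR_add_right)
  qed
  also have "\<dots> = c * f a (?z + y) - c * f a ?z"
    using f_homog[OF zyF assms(2,3)] f_homog[OF zF assms(2,3)] by (simp add: scaleR_add_right)
  also have "\<dots> = c * h y" using h_eq zD zF zyD assms(1) by (simp add: right_diff_distrib)
  finally show ?thesis .
qed

lemma h_scale:
  assumes "y \<in> Fvec F" "c \<in> F"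
  shows "h (c *\<^sub>R y) = c * h y"
proof (cases "c \<ge> 0")
  case True then show ?thesis using h_scale_pos assms by blast
next
  case False
  have "h (c *\<^sub>R y) = h ((- c) *\<^sub>R (- y))" by simp
  also have "\<dots> = (- c) * h (- y)"
    by (rule h_scale_pos[OF Fvec_neg[OF rsF assms(1)] rs_neg[OF rsF assms(2)]]) (use False in simp)
  also have "\<dots> = c * h y" using h_neg[OF assms(1)] by simp
  finally show ?thesis .
qed

lemma h_sum:
  assumes "y \<in> Fvec F"
  shows "h (\<Sum>i\<in>I. y $ i *\<^sub>R axis i 1) = (\<Sum>i\<in>I. y $ i * h (axis i 1))"
proof (induction I rule: infinite_finite_induct)
  case (infinite A) then show ?case by (simp add: h_0)
next
  case empty then show ?case by (simp add: h_0)
next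
  case (insert i A)
  have yi: "y $ i \<in> F" using assms unfolding Fvec_def by blast
  have t1: "y $ i *\<^sub>R axis i 1 \<in> Fvec F" using Fvec_scale[OF rsF yi Fvec_axis[OF rsF]] .
  have t2: "(\<Sum>i\<in>A. y $ i *\<^sub>R axis i 1) \<in> Fvec F"
    using assms by (intro Fvec_sum[OF rsF] Fvec_scale[OF rsF] Fvec_axis[OF rsF]) (auto simp: Fvec_def)
  show ?case using insert h_add[OF t1 t2] h_scale[OF Fvec_axis[OF rsF] yi] by simp
qed

lemma good_linear: "\<exists>l. linear l \<and> (\<forall>x\<in>Fvec F. l x \<in> F) \<and> (\<forall>x\<in>D. x \<in> Fvec F \<longrightarrow> f a x = l x)"
proof -
  define l where "l x = (\<Sum>i\<in>UNIV. x $ i * h (axis i 1))" for x :: "real^'n"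
  have lin: "linear l" unfolding l_def
    by (intro linearI) (simp_all add: sum.distrib sum_distrib_left algebra_simps)
  have lh: "l y = h y" if "y \<in> Fvec F" for y
  proof -
    have "y = (\<Sum>i\<in>UNIV. y $ i *\<^sub>R axis i 1)" using basis_expansion[of y] by (simp add: scalar_mult_eq_scaleR)
    then have "h y = (\<Sum>i\<in>UNIV. y $ i * h (axis i 1))" using h_sum[OF that, of UNIV] by simp
    then show ?thesis unfolding l_def by simp
  qed
  have "l x \<in> F" if "x \<in> Fvec F" for x
  proof -
    have "h (axis i 1) \<in> F" for i
    proof -
      have "axis i 1 \<in> Fvec F" by (rule Fvec_axis[OF rsF])
      let ?z = "zz (norm (axis i 1 :: real^'n))"
      have zD: "?z \<in> D" using zz[of "norm (axis i 1 :: real^'n)"] by (meson centre_in_cball norm_ge_zero subsetD)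
      have zF: "?z \<in> Fvec F" using zz(1) Zvec_Fvec rsF by blast
      have "?z + axis i 1 \<in> Fvec F" using zF Fvec_axis Fvec_add rsF by blast
      then show ?thesis unfolding h_def using f_F zF rs_diff rsF by blast
    qed
    then show ?thesis unfolding l_def using that rsF by (intro rs_sum) (auto simp: Fvec_def rs_mult)
  qed
  moreover have "\<forall>x\<in>D. x \<in> Fvec F \<longrightarrow> f a x = l x" using lh h_f by simp
  ultimately show ?thesis using lin by blast
qed

end


context PL begin

lemma good_dom:
  assumes g: "good a D" and l: "linear l" and fl: "\<forall>x\<in>D. x \<in> Fvec F \<longrightarrow> f a x = l x"
    and y: "y \<in> Fvec F"
  shows "f a y \<le> l y"
proof -
  have conic: "\<And>c x. c \<ge> 0 \<Longrightarrow> x \<in> D \<Longrightarrow> c *\<^sub>R x \<in> D"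
    using good_cc[OF g] convex_cone_scaleR by blast
  obtain z where z: "z \<in> Zvec" "cball z (norm y) \<subseteq> D"
    using deep_point[OF conic good_int[OF g]] by blast
  have zD: "z \<in> D" using z(2) by (meson centre_in_cball norm_ge_zero subsetD)
  have zyD: "z + y \<in> D" using z(2) in_cball_off[of y "norm y" z] by blast
  have zF: "z \<in> Fvec F" using Zvec_Fvec[OF rsF z(1)] .
  have zyF: "z + y \<in> Fvec F" using Fvec_add[OF rsF zF y] .
  have "f a z + f a y \<le> f a (z + y)" by (rule f_super[OF zF y])
  moreover have "f a z = l z" using fl zD zF by blast
  moreover have "f a (z + y) = l (z + y)" using fl zyD zyF by blast
  moreover have "l (z + y) = l z + l y" using l by (simp add: linear_add)
  ultimately show ?thesis by simp
qed

lemma good_compare: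
  assumes g: "good a D" and l1: "linear l1" and l2: "linear l2"
    and dom: "\<forall>y\<in>Fvec F. f a y \<le> l1 y" and fl: "\<forall>x\<in>D. x \<in> Fvec F \<longrightarrow> f a x = l2 x"
    and x: "x \<in> D"
  shows "l2 x \<le> l1 x"
proof -
  have conic: "\<And>c x. c \<ge> 0 \<Longrightarrow> x \<in> D \<Longrightarrow> c *\<^sub>R x \<in> D"
    using good_cc[OF g] convex_cone_scaleR by blast
  let ?S = "{x. l2 x \<le> l1 x}"
  have cl: "closed ?S"
    using l1 l2 by (intro closed_Collect_le linear_continuous_on) (simp_all add: linear_conv_bounded_linear)
  have sub: "interior D \<inter> Dy \<subseteq> ?S"
  proof
    fix w assume w: "w \<in> interior D \<inter> Dy"
    then obtain k :: nat where k: "(2^k) *\<^sub>R w \<in> Zvec" unfolding Dy_def by blast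
    have "w \<in> D" using w interior_subset by blast
    then have kD: "(2^k) *\<^sub>R w \<in> D" using conic by simp
    have kF: "(2^k) *\<^sub>R w \<in> Fvec F" using Zvec_Fvec[OF rsF k] .
    have "l2 ((2^k) *\<^sub>R w) \<le> l1 ((2^k) *\<^sub>R w)" using fl kD kF dom by fastforce
    then have "2^k * l2 w \<le> 2^k * l1 w" using l1 l2 by (simp add: linear_scale)
    then show "w \<in> ?S" by simp
  qed
  have "closure (interior D \<inter> Dy) = closure (interior D)"
    by (rule closure_open_Int_superset) (simp_all add: closure_Dy)
  also have "\<dots> = closure D"
    using good_cc[OF g] good_int[OF g] by (intro convex_closure_interior) (simp_all add: convex_cone_def)
  also have "\<dots> = D" using good_closed[OF g] by simp
  finally have "D \<subseteq> ?S" using closure_minimal[OF sub cl] by simp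
  then show ?thesis using x by blast
qed

lemma good_of_fans:
  assumes fans: "\<And>b. linearity_fan F (\<mu> a b) (S b)" and d: "\<And>b. d b \<in> S b"
    and int: "interior (\<Inter>b. d b) \<noteq> {}"
  shows "good a (\<Inter>b. d b)"
  unfolding good_def
proof (intro conjI allI)
  have cf: "complete_fan F (S b)" for b using fans[of b] unfolding linearity_fan_def by (rule conjunct1)
  show "closed (\<Inter>b. d b)" using fan_cone_props(1)[OF cf d] by blast
  show "convex_cone (\<Inter>b. d b)" using fan_cone_props(2)[OF cf d] by (rule convex_cone_INT)
  show "interior (\<Inter>b. d b) \<noteq> {}" by (rule int)
  fix b
  have "\<forall>C\<in>S b. linear_on_cone F (\<mu> a b) C" using fans[of b] unfolding linearity_fan_def by (rule conjunct2)
  then have "linear_on_cone F (\<mu> a b) (d b)" using d by blast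
  then obtain A where "linear A" "\<forall>x\<in>Fvec F. A x \<in> Fvec F" "\<forall>x\<in>d b. \<mu> a b x = A x"
    unfolding linear_on_cone_def by (elim exE conjE)
  then show "\<exists>A. linear A \<and> (\<forall>x\<in>Fvec F. A x \<in> Fvec F) \<and> (\<forall>x\<in>\<Inter>b. d b. \<mu> a b x = A x)" by blast
qed

end


lemma fan_parts:
  assumes "complete_fan F S"
  shows "finite S" "\<Union>S = UNIV" "\<And>C D. C \<in> S \<Longrightarrow> D \<in> S \<Longrightarrow> (C \<inter> D) face_of C"
proof -
  have ff: "Ffan F S" using assms unfolding complete_fan_def by (rule conjunct1)
  show "\<Union>S = UNIV" using assms unfolding complete_fan_def by (rule conjunct2)
  show "finite S" using ff unfolding Ffan_def by (rule conjunct1)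
  have "\<forall>C\<in>S. \<forall>D\<in>S. (C \<inter> D) face_of C \<and> (C \<inter> D) face_of D" using ff unfolding Ffan_def by (elim conjE)
  then show "\<And>C D. C \<in> S \<Longrightarrow> D \<in> S \<Longrightarrow> (C \<inter> D) face_of C" by blast
qed

lemma chamber_exists:
  fixes S :: "'i::finite \<Rightarrow> (real^'n) set set" and C :: "(real^'n) set"
  assumes fans: "\<And>b. complete_fan F (S b)" and cvx: "convex C" and ne: "C \<noteq> {}"
    and c: "\<And>b. c b \<in> S b" "\<And>b. C \<subseteq> c b"
  shows "\<exists>d. (\<forall>b. d b \<in> S b \<and> C \<subseteq> d b) \<and> interior (\<Inter>b. d b) \<noteq> {}"
proof -
  obtain x0 where x0: "x0 \<in> rel_interior C" using rel_interior_eq_empty[OF cvx] ne by blast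
  have x0C: "x0 \<in> C" using x0 rel_interior_subset by blast
  have cl: "\<And>b e. e \<in> S b \<Longrightarrow> closed e" using fan_cone_props(1)[OF fans] by blast
  define N where "N = (\<Union>b. \<Union>{e\<in>S b. x0 \<notin> e})"
  have "closed N" unfolding N_def
    using fan_parts(1)[OF fans] cl by (intro closed_Union) auto
  moreover have "x0 \<notin> N" unfolding N_def by blast
  ultimately obtain r where r: "r > 0" "ball x0 r \<subseteq> - N"
    using open_contains_ball[of "- N"] by (metis ComplI open_Compl)
  define P where "P = {d. \<forall>b. d b \<in> S b \<and> x0 \<in> d b}"
  have finP: "finite P"
  proof -
    have "P \<subseteq> Pi\<^sub>E UNIV S" unfolding P_def by (auto simp: PiE_UNIV_domain)
    moreover have "finite (Pi\<^sub>E UNIV S)" using fan_parts(1)[OF fans] by (intro finite_PiE) auto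
    ultimately show ?thesis by (rule finite_subset)
  qed
  have cover: "ball x0 r \<subseteq> \<Union>((\<lambda>d. \<Inter>b. d b) ` P)"
  proof
    fix y assume y: "y \<in> ball x0 r"
    have "\<exists>e. e \<in> S b \<and> y \<in> e \<and> x0 \<in> e" for b
    proof -
      obtain e where e: "e \<in> S b" "y \<in> e" using fan_parts(2)[OF fans, of b] by blast
      have "x0 \<in> e"
      proof (rule ccontr)
        assume "x0 \<notin> e"
        then have "y \<in> N" unfolding N_def using e by blast
        then show False using y r by blast
      qed
      then show ?thesis using e by blast
    qed
    then obtain d where "\<forall>b. d b \<in> S b \<and> y \<in> d b \<and> x0 \<in> d b" by metis
    then show "y \<in> \<Union>((\<lambda>d. \<Inter>b. d b) ` P)" unfolding P_def by blast
  qed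
  have "\<exists>K\<in>(\<lambda>d. \<Inter>b. d b) ` P. ball x0 r \<inter> interior K \<noteq> {}"
  proof (rule open_cover_closed_interior[OF _ _ _ _ cover])
    show "finite ((\<lambda>d. \<Inter>b. d b) ` P)" using finP by simp
    show "\<forall>K\<in>(\<lambda>d. \<Inter>b. d b) ` P. closed K" unfolding P_def using cl by blast
  qed (use r in simp_all)
  then obtain d where d: "d \<in> P" "interior (\<Inter>b. d b) \<noteq> {}" by blast
  have "C \<subseteq> d b" for b
  proof -
    have db: "d b \<in> S b" "x0 \<in> d b" using d(1) unfolding P_def by blast+
    have face: "(c b \<inter> d b) face_of c b" using fan_parts(3)[OF fans c(1) db(1)] .
    have "C \<subseteq> c b \<inter> d b"
      by (rule subset_of_face_of[OF face c(2)]) (use x0 x0C c(2) db(2) in blast)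
    then show ?thesis by blast
  qed
  then show ?thesis using d unfolding P_def by blast
qed

context PL begin

lemma good_inv:
  assumes g: "good a0 D" and A: "linear A" "\<forall>x\<in>D. \<mu> a0 a x = A x"
  shows "\<exists>B. linear B \<and> (\<forall>x\<in>Fvec F. B x \<in> Fvec F) \<and> (\<forall>x. B (A x) = x)"
proof -
  have cf: "complete_fan F (T a a0)" using T_fan[of a a0] unfolding linearity_fan_def by (rule conjunct1)
  have lc: "\<forall>C\<in>T a a0. linear_on_cone F (\<mu> a a0) C" using T_fan[of a a0] unfolding linearity_fan_def by (rule conjunct2)
  have contA: "continuous_on UNIV A" using A(1) by (simp add: linear_continuous_on linear_conv_bounded_linear)
  have "\<exists>K\<in>(\<lambda>e. A -` e) ` T a a0. interior D \<inter> interior K \<noteq> {}"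
  proof (rule open_cover_closed_interior)
    show "finite ((\<lambda>e. A -` e) ` T a a0)" using fan_parts(1)[OF cf] by simp
    show "\<forall>K\<in>(\<lambda>e. A -` e) ` T a a0. closed K"
      using fan_cone_props(1)[OF cf] contA by (auto intro: closed_vimage continuous_on_subset)
    show "interior D \<subseteq> \<Union>((\<lambda>e. A -` e) ` T a a0)" using fan_parts(2)[OF cf] by blast
  qed (use good_int[OF g] in simp_all)
  then obtain e where e: "e \<in> T a a0" "interior D \<inter> interior (A -` e) \<noteq> {}" by blast
  obtain B where B: "linear B" "\<forall>x\<in>Fvec F. B x \<in> Fvec F" "\<forall>y\<in>e. \<mu> a a0 y = B y"
    using lc e(1) unfolding linear_on_cone_def by blast
  have ecc: "convex_cone e" using fan_cone_props(2)[OF cf e(1)] .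
  define S0 where "S0 = D \<inter> A -` e"
  have conic: "\<And>c x. c \<ge> 0 \<Longrightarrow> x \<in> S0 \<Longrightarrow> c *\<^sub>R x \<in> S0"
    unfolding S0_def using good_cc[OF g] ecc A(1) by (auto simp: convex_cone_scaleR linear_scale)
  have "interior S0 \<noteq> {}" unfolding S0_def using e(2) by (simp add: interior_Int)
  then obtain z where z: "z \<in> Zvec" "cball z 1 \<subseteq> S0" using deep_point[OF conic] by blast
  have BA: "B (A w) = w" if "w \<in> S0" "w \<in> Fvec F" for w
  proof -
    have "\<mu> a a0 (\<mu> a0 a w) = w" by (rule mu_inv[OF that(2)])
    moreover have "\<mu> a0 a w = A w" using A(2) that(1) unfolding S0_def by blast
    moreover have "\<mu> a a0 (A w) = B (A w)" using B(3) that(1) unfolding S0_def by blast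
    ultimately show ?thesis by simp
  qed
  have zF: "z \<in> Fvec F" using Zvec_Fvec[OF rsF z(1)] .
  have zS: "z \<in> S0" using z(2) by (meson centre_in_cball zero_le_one subsetD)
  have "(B \<circ> A) v = id v" if vB: "v \<in> Basis" for v
  proof -
    obtain i where v: "v = axis i 1" using axis_inverse[OF vB] by blast
    have nv: "norm v = 1" using vB by (rule norm_Basis)
    have ziS: "z + v \<in> S0" using z(2) in_cball_off[of v 1 z] nv by auto
    have ziF: "z + v \<in> Fvec F" using Fvec_add[OF rsF zF] Fvec_axis[OF rsF] v by blast
    have "B (A (z + v)) = B (A z) + B (A v)" using A(1) B(1) by (simp add: linear_add)
    then show ?thesis using BA[OF ziS ziF] BA[OF zS zF] by simp
  qed
  then have "B \<circ> A = id" by (intro linear_eq_stdbasis linear_compose A(1) B(1) linear_id)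
  then have "\<forall>x. B (A x) = x" by (metis comp_apply id_apply)
  then show ?thesis using B by blast
qed

end


lemma eq_on_Dy:
  fixes g h :: "real^'n \<Rightarrow> real"
  assumes "continuous_on UNIV g" "continuous_on UNIV h" "\<And>x. x \<in> Dy \<Longrightarrow> g x = h x"
  shows "g x = h x"
proof -
  have "Dy \<subseteq> {x. g x = h x}" using assms(3) by blast
  moreover have "closed {x. g x = h x}"
    using assms(1,2) by (intro closed_Collect_eq) auto
  ultimately have "closure Dy \<subseteq> {x. g x = h x}" by (rule closure_minimal)
  then show ?thesis using closure_Dy by auto
qed

lemma Zvec_scale2: "z \<in> Zvec \<Longrightarrow> (2^j) *\<^sub>R z \<in> Zvec"
  unfolding Zvec_def by (auto intro: Ints_mult Ints_power)

lemma Dy_common: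
  assumes "x \<in> Dy" "x' \<in> Dy"
  obtains k :: nat where "(2^k) *\<^sub>R x \<in> Zvec" "(2^k) *\<^sub>R x' \<in> Zvec"
proof -
  obtain k1 :: nat where k1: "(2^k1) *\<^sub>R x \<in> Zvec" using assms(1) unfolding Dy_def by blast
  obtain k2 :: nat where k2: "(2^k2) *\<^sub>R x' \<in> Zvec" using assms(2) unfolding Dy_def by blast
  have "(2^(k2) * 2^k1) *\<^sub>R x \<in> Zvec" using Zvec_scale2[OF k1, of k2] by simp
  moreover have "(2^(k2) * 2^k1) *\<^sub>R x' \<in> Zvec" using Zvec_scale2[OF k2, of k1] by (simp add: mult.commute)
  ultimately show ?thesis using that[of "k2 + k1"] by (simp add: power_add)
qed

context PL begin

lemma sigma_good:
  assumes "C \<in> Sigma_chart F \<mu> a0"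
  shows "\<exists>D. good a0 D \<and> C \<subseteq> D"
proof -
  obtain S where S: "\<forall>b. minimal_fan F (\<mu> a0 b) (S b)" "C \<in> common_refinement S"
    using assms unfolding Sigma_chart_def by blast
  obtain c where c: "C = (\<Inter>b. c b)" "\<forall>b. c b \<in> S b"
    using S(2) unfolding common_refinement_def by blast
  have lf: "linearity_fan F (\<mu> a0 b) (S b)" for b using S(1) unfolding minimal_fan_def by blast
  have cf: "complete_fan F (S b)" for b using lf[of b] unfolding linearity_fan_def by (rule conjunct1)
  have cc: "convex_cone C" unfolding c(1) by (rule convex_cone_INT) (use fan_cone_props(2)[OF cf] c(2) in blast)
  have "\<exists>d. (\<forall>b. d b \<in> S b \<and> C \<subseteq> d b) \<and> interior (\<Inter>b. d b) \<noteq> {}"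
  proof (rule chamber_exists[OF cf])
    show "convex C" using cc by (simp add: convex_cone_def)
    show "C \<noteq> {}" using cc by (simp add: convex_cone_def)
    show "c b \<in> S b" "C \<subseteq> c b" for b using c by auto
  qed
  then obtain d where d: "\<forall>b. d b \<in> S b \<and> C \<subseteq> d b" "interior (\<Inter>b. d b) \<noteq> {}" by blast
  have "good a0 (\<Inter>b. d b)" by (rule good_of_fans[OF lf]) (use d in auto)
  moreover have "C \<subseteq> (\<Inter>b. d b)" using d by blast
  ultimately show ?thesis by blast
qed

lemma good_linear': "good a D \<Longrightarrow> \<exists>l. linear l \<and> (\<forall>x\<in>Fvec F. l x \<in> F) \<and> (\<forall>x\<in>D. x \<in> Fvec F \<longrightarrow> f a x = l x)"
proof -
  assume g: "good a D"
  interpret GD F \<mu> p a D by unfold_locales (rule g)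
  show ?thesis by (rule good_linear)
qed

lemma cone_data:
  assumes "C \<in> Sigma_chart F \<mu> a0"
  shows "\<exists>D l A B. good a0 D \<and> C \<subseteq> D \<and> linear l \<and> (\<forall>x\<in>Fvec F. l x \<in> F) \<and>
     (\<forall>x\<in>D. x \<in> Fvec F \<longrightarrow> f a0 x = l x) \<and> linear A \<and> (\<forall>x\<in>D. \<mu> a0 a x = A x) \<and>
     linear B \<and> (\<forall>x\<in>Fvec F. B x \<in> Fvec F) \<and> (\<forall>x. B (A x) = x)"
proof -
  obtain D where D: "good a0 D" "C \<subseteq> D" using sigma_good[OF assms] by blast
  obtain l where l: "linear l" "\<forall>x\<in>Fvec F. l x \<in> F" "\<forall>x\<in>D. x \<in> Fvec F \<longrightarrow> f a0 x = l x"
    using good_linear'[OF D(1)] by blast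
  obtain A where A: "linear A" "\<forall>x\<in>D. \<mu> a0 a x = A x" using good_lin[OF D(1), of a] by blast
  obtain B where B: "linear B" "\<forall>x\<in>Fvec F. B x \<in> Fvec F" "\<forall>x. B (A x) = x"
    using good_inv[OF D(1) A] by blast
  show ?thesis using D l A B by blast
qed

lemma part1: "\<forall>a0. \<forall>C\<in>Sigma_chart F \<mu> a0. linear_on_PLcone F \<mu> p a0 C"
proof (intro allI ballI)
  fix a0 C assume C: "C \<in> Sigma_chart F \<mu> a0"
  show "linear_on_PLcone F \<mu> p a0 C" unfolding linear_on_PLcone_def
  proof
    fix a
    obtain D l A B where dat: "good a0 D" "C \<subseteq> D" "linear l" "\<forall>x\<in>Fvec F. l x \<in> F"
     "\<forall>x\<in>D. x \<in> Fvec F \<longrightarrow> f a0 x = l x" "linear A" "\<forall>x\<in>D. \<mu> a0 a x = A x"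
     "linear B" "\<forall>x\<in>Fvec F. B x \<in> Fvec F" "\<forall>x. B (A x) = x"
      using cone_data[OF C, of a] by blast
    have "Klinear_functional F (l \<circ> B)"
      by (rule linear_F_F'[OF linear_compose[OF dat(8) dat(3)] _ rsF rsF]) (use dat(4,9) in auto)
    moreover have "p m = (l \<circ> B) (m a)" if m: "m \<in> elems F \<mu>" "m a0 \<in> C" for m
    proof -
      have mD: "m a0 \<in> D" using m(2) dat(2) by blast
      have mF: "m a0 \<in> Fvec F" using elems_Fvec[OF m(1)] .
      have "p m = f a0 (m a0)" unfolding f_def using elems_pinv[OF m(1)] by simp
      also have "\<dots> = l (m a0)" using dat(5) mD mF by blast
      also have "\<dots> = l (B (A (m a0)))" using dat(10) by simp
      also have "A (m a0) = m a" using elems_chart[OF m(1), of a a0] dat(7) mD by simp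
      finally show ?thesis by simp
    qed
    ultimately show "\<exists>l. Klinear_functional F l \<and> (\<forall>m\<in>elems F \<mu>. m a0 \<in> C \<longrightarrow> p m = l (m a))"
      by blast
  qed
qed

end


context PL begin

definition Ch :: "'i \<Rightarrow> (real^'n) set set" where
  "Ch a = (\<lambda>d. \<Inter>b. d b) ` {d. (\<forall>b. d b \<in> T a b) \<and> interior (\<Inter>b. d b) \<noteq> {}}"

definition lin :: "'i \<Rightarrow> (real^'n) set \<Rightarrow> real^'n \<Rightarrow> real" where
  "lin a D = (SOME l. linear l \<and> (\<forall>x\<in>Fvec F. l x \<in> F) \<and> (\<forall>x\<in>D. x \<in> Fvec F \<longrightarrow> f a x = l x))"

definition Q :: "'i \<Rightarrow> (real^'n \<Rightarrow> real) set" where "Q a = lin a ` Ch a"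

definition q0 :: "'i \<Rightarrow> real^'n \<Rightarrow> real" where "q0 a x = Min ((\<lambda>l. l x) ` Q a)"

lemma Ch_good: "D \<in> Ch a \<Longrightarrow> good a D"
proof -
  assume "D \<in> Ch a"
  then obtain d where d: "D = (\<Inter>b. d b)" "\<forall>b. d b \<in> T a b" "interior (\<Inter>b. d b) \<noteq> {}"
    unfolding Ch_def by blast
  show ?thesis unfolding d(1) by (rule good_of_fans[OF T_fan]) (use d in auto)
qed

lemma Ch_finite: "finite (Ch a)"
proof -
  have fin: "finite (T a b)" for b
  proof -
    have "complete_fan F (T a b)" using T_fan[of a b] unfolding linearity_fan_def by (rule conjunct1)
    then show ?thesis by (rule fan_parts(1))
  qed
  have sub: "{d. (\<forall>b. d b \<in> T a b) \<and> interior (\<Inter>b. d b) \<noteq> {}} \<subseteq> Pi\<^sub>E UNIV (T a)"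
  proof
    fix d assume "d \<in> {d. (\<forall>b. d b \<in> T a b) \<and> interior (\<Inter>b. d b) \<noteq> {}}"
    then have "\<forall>b. d b \<in> T a b" by simp
    then show "d \<in> Pi\<^sub>E UNIV (T a)" unfolding PiE_UNIV_domain by (simp add: Pi_def)
  qed
  have "finite (Pi\<^sub>E UNIV (T a))" by (rule finite_PiE) (simp_all add: fin)
  then have "finite {d. (\<forall>b. d b \<in> T a b) \<and> interior (\<Inter>b. d b) \<noteq> {}}" using sub by (rule finite_subset[rotated])
  then show ?thesis unfolding Ch_def by (rule finite_imageI)
qed

lemma Ch_cover: "\<exists>D\<in>Ch a. x \<in> D"
proof -
  have cf: "complete_fan F (T a b)" for b using T_fan[of a b] unfolding linearity_fan_def by (rule conjunct1)
  have ex: "\<exists>e. e \<in> T a b \<and> x \<in> e" for b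
  proof -
    have "x \<in> \<Union>(T a b)" using fan_parts(2)[OF cf[of b]] by simp
    then obtain e where "e \<in> T a b" "x \<in> e" by (rule UnionE)
    then show ?thesis by blast
  qed
  define c where "c b = (SOME e. e \<in> T a b \<and> x \<in> e)" for b
  have c: "c b \<in> T a b \<and> x \<in> c b" for b unfolding c_def by (rule someI_ex[OF ex])
  have "\<exists>d. (\<forall>b. d b \<in> T a b \<and> {x} \<subseteq> d b) \<and> interior (\<Inter>b. d b) \<noteq> {}"
  proof (rule chamber_exists[OF cf, of "{x}" c])
    show "convex {x}" by simp
    show "{x} \<noteq> {}" by simp
    show "c b \<in> T a b" for b using c[of b] by (rule conjunct1)
    show "{x} \<subseteq> c b" for b using c[of b] by simp
  qed
  then obtain d where d: "\<forall>b. d b \<in> T a b \<and> {x} \<subseteq> d b" "interior (\<Inter>b. d b) \<noteq> {}" by blast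
  have "(\<Inter>b. d b) \<in> Ch a" unfolding Ch_def using d by (intro imageI CollectI) auto
  moreover have "x \<in> (\<Inter>b. d b)" using d(1) by blast
  ultimately show ?thesis by blast
qed

lemma lin_prop:
  assumes "good a D"
  shows "linear (lin a D)" "\<forall>x\<in>Fvec F. lin a D x \<in> F" "\<forall>x\<in>D. x \<in> Fvec F \<longrightarrow> f a x = lin a D x"
proof -
  let ?P = "\<lambda>l. linear l \<and> (\<forall>x\<in>Fvec F. l x \<in> F) \<and> (\<forall>x\<in>D. x \<in> Fvec F \<longrightarrow> f a x = l x)"
  have ex: "\<exists>l. ?P l" by (rule good_linear'[OF assms])
  have "?P (SOME l. ?P l)" using ex by (rule someI_ex)
  then have P: "?P (lin a D)" unfolding lin_def .
  show "linear (lin a D)" using P by (rule conjunct1)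
  show "\<forall>x\<in>Fvec F. lin a D x \<in> F" using P by (blast dest: conjunct2 conjunct1)
  show "\<forall>x\<in>D. x \<in> Fvec F \<longrightarrow> f a x = lin a D x" using P by (blast dest: conjunct2)
qed

lemma Q_finite: "finite (Q a)" unfolding Q_def using Ch_finite by simp
lemma Q_ne: "Q a \<noteq> {}"
proof -
  obtain D where "D \<in> Ch a" "(0::real^'n) \<in> D" using Ch_cover by blast
  then have "lin a D \<in> Q a" unfolding Q_def by blast
  then show ?thesis by blast
qed

lemma Q_prop:
  assumes "l \<in> Q a"
  shows "linear l" "\<forall>x\<in>Fvec F. l x \<in> F" "\<forall>y\<in>Fvec F. f a y \<le> l y"
proof -
  obtain D where D: "D \<in> Ch a" "l = lin a D" using assms unfolding Q_def by blast
  note g = Ch_good[OF D(1)]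
  show "linear l" unfolding D(2) by (rule lin_prop(1)[OF g])
  show "\<forall>x\<in>Fvec F. l x \<in> F" unfolding D(2) by (rule lin_prop(2)[OF g])
  show "\<forall>y\<in>Fvec F. f a y \<le> l y" unfolding D(2)
    using good_dom[OF g lin_prop(1)[OF g] lin_prop(3)[OF g]] by (rule ballI)
qed

lemma q0_eq:
  assumes g: "good a D" and l: "linear l" and fl: "\<forall>x\<in>D. x \<in> Fvec F \<longrightarrow> f a x = l x" and x: "x \<in> D"
  shows "q0 a x = l x"
proof -
  have ge: "l x \<le> l' x" if "l' \<in> Q a" for l'
    using good_compare[OF g Q_prop(1)[OF that] l Q_prop(3)[OF that] fl x] .
  obtain D' where D': "D' \<in> Ch a" "x \<in> D'" using Ch_cover by blast
  note g' = Ch_good[OF D'(1)]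
  have inQ: "lin a D' \<in> Q a" unfolding Q_def using D'(1) by blast
  have "lin a D' x \<le> l x"
    by (rule good_compare[OF g' l lin_prop(1)[OF g'] _ lin_prop(3)[OF g'] D'(2)])
       (use good_dom[OF g l fl] in blast)
  then have eq: "lin a D' x = l x" using ge[OF inQ] by simp
  show ?thesis unfolding q0_def
  proof (rule Min_eqI)
    show "finite ((\<lambda>l. l x) ` Q a)" by (rule finite_imageI[OF Q_finite])
    show "l x \<le> y" if "y \<in> (\<lambda>l. l x) ` Q a" for y
    proof -
      from that obtain l' where l': "l' \<in> Q a" "y = l' x" by (rule imageE)
      show ?thesis unfolding l'(2) by (rule ge[OF l'(1)])
    qed
    have "l x = (\<lambda>l. l x) (lin a D')" using eq by (rule sym)
    then show "l x \<in> (\<lambda>l. l x) ` Q a" using inQ by (rule image_eqI)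
  qed
qed

lemma q0_F: "x \<in> Fvec F \<Longrightarrow> q0 a x = f a x"
proof -
  assume xF: "x \<in> Fvec F"
  obtain D where D: "D \<in> Ch a" "x \<in> D" using Ch_cover by blast
  note g = Ch_good[OF D(1)]
  have "q0 a x = lin a D x" by (rule q0_eq[OF g lin_prop(1)[OF g] lin_prop(3)[OF g] D(2)])
  moreover have "f a x = lin a D x" using lin_prop(3)[OF g] D(2) xF by blast
  ultimately show ?thesis by simp
qed

lemma q0_cont: "continuous_on UNIV (q0 a)"
proof -
  have "continuous_on UNIV (\<lambda>x. Min ((\<lambda>l. l x) ` Q a))"
    by (rule continuous_on_Min_fam[OF Q_finite Q_ne])
       (use Q_prop(1) in \<open>simp add: linear_continuous_on linear_conv_bounded_linear\<close>)
  then show ?thesis unfolding q0_def[abs_def] .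
qed

lemma q0_homog: "c \<ge> 0 \<Longrightarrow> q0 a (c *\<^sub>R x) = c * q0 a x"
proof -
  assume c: "c \<ge> 0"
  obtain D where D: "D \<in> Ch a" "x \<in> D" using Ch_cover by blast
  note g = Ch_good[OF D(1)]
  have cD: "c *\<^sub>R x \<in> D" using convex_cone_scaleR[OF good_cc[OF g] c D(2)] .
  have e1: "q0 a (c *\<^sub>R x) = lin a D (c *\<^sub>R x)" by (rule q0_eq[OF g lin_prop(1)[OF g] lin_prop(3)[OF g] cD])
  have e2: "lin a D (c *\<^sub>R x) = c * lin a D x" using linear_scale[OF lin_prop(1)[OF g], of c x] by simp
  have e3: "q0 a x = lin a D x" by (rule q0_eq[OF g lin_prop(1)[OF g] lin_prop(3)[OF g] D(2)])
  show ?thesis unfolding e1 e2 e3 ..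
qed

lemma q0_vals:
  assumes "x \<in> Fvec F'" "real_subring F'" "F \<subseteq> F'"
  shows "q0 a x \<in> F'"
proof -
  have "q0 a x \<in> (\<lambda>l. l x) ` Q a" unfolding q0_def
    by (rule Min_in) (simp_all add: Q_finite Q_ne)
  then obtain l where l: "l \<in> Q a" "q0 a x = l x" by blast
  have "Klinear_functional F' l" by (rule linear_F_F'[OF Q_prop(1,2)[OF l(1)] rsF assms(2,3)])
  then have "\<forall>x\<in>Fvec F'. l x \<in> F'" unfolding Klinear_functional_def by (rule conjunct1)
  then have "l x \<in> F'" using assms(1) by (rule bspec)
  then show ?thesis unfolding l(2) .
qed

lemma q0_chart: "q0 c0 (\<mu> a c0 x) = q0 a x"
proof -
  have "(q0 c0 \<circ> \<mu> a c0) = q0 a"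
  proof (rule eq_on_Zvec_homog)
    show "continuous_on UNIV (q0 c0 \<circ> \<mu> a c0)"
      by (rule continuous_on_compose[OF mu_cont continuous_on_subset[OF q0_cont]]) simp
    show "continuous_on UNIV (q0 a)" by (rule q0_cont)
    show "(q0 c0 \<circ> \<mu> a c0) (c *\<^sub>R x) = c * (q0 c0 \<circ> \<mu> a c0) x" if "c \<ge> 0" for c x
      using that by (simp add: mu_homog q0_homog)
    show "q0 a (c *\<^sub>R x) = c * q0 a x" if "c \<ge> 0" for c x using that by (rule q0_homog)
    show "(q0 c0 \<circ> \<mu> a c0) z = q0 a z" if "z \<in> Zvec" for z
    proof -
      have zF: "z \<in> Fvec F" using Zvec_Fvec[OF rsF that] .
      have "q0 c0 (\<mu> a c0 z) = f c0 (\<mu> a c0 z)" using q0_F mu_F[OF zF] by blast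
      also have "\<dots> = f a z" unfolding f_def using pinv_chart[OF zF] by simp
      also have "\<dots> = q0 a z" using q0_F[OF zF] by simp
      finally show ?thesis by simp
    qed
  qed
  then show ?thesis by (metis comp_apply)
qed

end


context PL begin

lemma Phi_homog:
  assumes c: "c \<ge> 0"
  shows "\<mu> b c0 (\<mu> c0 b (c *\<^sub>R x) + \<mu> c0 b (c *\<^sub>R x')) = c *\<^sub>R \<mu> b c0 (\<mu> c0 b x + \<mu> c0 b x')"
proof -
  have "\<mu> c0 b (c *\<^sub>R x) + \<mu> c0 b (c *\<^sub>R x') = c *\<^sub>R (\<mu> c0 b x + \<mu> c0 b x')"
    by (simp add: mu_homog[OF c] scaleR_add_right)
  then show ?thesis by (simp add: mu_homog[OF c])
qed

lemma Min_range_scale: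
  fixes g :: "'i \<Rightarrow> real"
  assumes c: "c \<ge> 0"
  shows "Min (range (\<lambda>b. c * g b)) = c * Min (range g)"
proof -
  have "mono (\<lambda>y::real. c * y)" using c by (simp add: mono_def mult_left_mono)
  then have "c * Min (range g) = Min ((\<lambda>y. c * y) ` range g)"
    by (rule mono_Min_commute) simp_all
  then show ?thesis by (simp add: image_image)
qed

lemma minid:
  "q0 c0 x + q0 c0 x' = Min (range (\<lambda>b. q0 c0 (\<mu> b c0 (\<mu> c0 b x + \<mu> c0 b x'))))"
proof -
  define G where "G x x' = q0 c0 x + q0 c0 x'" for x x'
  define H where "H x x' = Min (range (\<lambda>b. q0 c0 (\<mu> b c0 (\<mu> c0 b x + \<mu> c0 b x'))))" for x x'
  have Z: "G z z' = H z z'" if z: "z \<in> Zvec" "z' \<in> Zvec" for z z'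
  proof -
    have zF: "z \<in> Fvec F" "z' \<in> Fvec F" using Zvec_Fvec[OF rsF] z by blast+
    have e0: "p (pinv \<mu> c0 z) + p (pinv \<mu> c0 z') =
        Min (range (\<lambda>b. p (padd \<mu> b (pinv \<mu> c0 z) (pinv \<mu> c0 z'))))"
      by (rule p_min[OF pinv_elems[OF zF(1)] pinv_elems[OF zF(2)]])
    have e1: "p (pinv \<mu> c0 z) = q0 c0 z" using q0_F[OF zF(1)] unfolding f_def by simp
    have e2: "p (pinv \<mu> c0 z') = q0 c0 z'" using q0_F[OF zF(2)] unfolding f_def by simp
    have fe: "(\<lambda>b. p (padd \<mu> b (pinv \<mu> c0 z) (pinv \<mu> c0 z'))) =
        (\<lambda>b. q0 c0 (\<mu> b c0 (\<mu> c0 b z + \<mu> c0 b z')))"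
    proof
      fix b
      have yF: "\<mu> c0 b z + \<mu> c0 b z' \<in> Fvec F" using Fvec_add[OF rsF mu_F[OF zF(1)] mu_F[OF zF(2)]] .
      have "p (padd \<mu> b (pinv \<mu> c0 z) (pinv \<mu> c0 z')) = f b (\<mu> c0 b z + \<mu> c0 b z')"
        unfolding padd_pinv f_def ..
      also have "\<dots> = q0 b (\<mu> c0 b z + \<mu> c0 b z')" using q0_F[OF yF] by simp
      also have "\<dots> = q0 c0 (\<mu> b c0 (\<mu> c0 b z + \<mu> c0 b z'))" using q0_chart by simp
      finally show "p (padd \<mu> b (pinv \<mu> c0 z) (pinv \<mu> c0 z')) = q0 c0 (\<mu> b c0 (\<mu> c0 b z + \<mu> c0 b z'))" .
    qed
    show ?thesis unfolding G_def H_def using e0 unfolding e1 e2 fe .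
  qed
  have Gh: "G (c *\<^sub>R x) (c *\<^sub>R x') = c * G x x'" if "c \<ge> 0" for c x x'
    unfolding G_def using q0_homog[OF that] by (simp add: distrib_left)
  have Hh: "H (c *\<^sub>R x) (c *\<^sub>R x') = c * H x x'" if c: "c \<ge> 0" for c x x'
    unfolding H_def Phi_homog[OF c] q0_homog[OF c] by (rule Min_range_scale[OF c])
  have D: "G x x' = H x x'" if xy: "x \<in> Dy" "x' \<in> Dy" for x x'
  proof -
    obtain k :: nat where k: "(2^k) *\<^sub>R x \<in> Zvec" "(2^k) *\<^sub>R x' \<in> Zvec" by (rule Dy_common[OF xy])
    have "(2^k) * G x x' = (2^k) * H x x'"
      using Z[OF k] Gh[of "2^k" x x'] Hh[of "2^k" x x'] by simp
    then show ?thesis by simp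
  qed
  have contG1: "continuous_on UNIV (\<lambda>x. G x x')" for x'
    unfolding G_def by (intro continuous_intros q0_cont)
  have contG2: "continuous_on UNIV (\<lambda>x'. G x x')" for x
    unfolding G_def by (intro continuous_intros q0_cont)
  have contH1: "continuous_on UNIV (\<lambda>x. H x x')" for x'
    unfolding H_def
  proof (rule continuous_on_Min_fam[of UNIV UNIV, simplified])
    fix b
    show "continuous_on UNIV (\<lambda>x. q0 c0 (\<mu> b c0 (\<mu> c0 b x + \<mu> c0 b x')))"
    proof -
      have c1: "continuous_on UNIV (\<lambda>x. \<mu> c0 b x + \<mu> c0 b x')" by (intro continuous_on_add mu_cont continuous_on_const)
      have c2: "continuous_on UNIV (\<lambda>x. \<mu> b c0 (\<mu> c0 b x + \<mu> c0 b x'))" by (rule continuous_on_compose2[OF mu_cont c1]) simp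
      show ?thesis by (rule continuous_on_compose2[OF q0_cont c2]) simp
    qed
  qed simp
  have contH2: "continuous_on UNIV (\<lambda>x'. H x x')" for x
    unfolding H_def
  proof (rule continuous_on_Min_fam[of UNIV UNIV, simplified])
    fix b
    show "continuous_on UNIV (\<lambda>x'. q0 c0 (\<mu> b c0 (\<mu> c0 b x + \<mu> c0 b x')))"
    proof -
      have c1: "continuous_on UNIV (\<lambda>x'. \<mu> c0 b x + \<mu> c0 b x')" by (intro continuous_on_add mu_cont continuous_on_const)
      have c2: "continuous_on UNIV (\<lambda>x'. \<mu> b c0 (\<mu> c0 b x + \<mu> c0 b x'))" by (rule continuous_on_compose2[OF mu_cont c1]) simp
      show ?thesis by (rule continuous_on_compose2[OF q0_cont c2]) simp
    qed
  qed simp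
  have D1: "G x x' = H x x'" if "x' \<in> Dy" for x x'
    by (rule eq_on_Dy[OF contG1 contH1]) (rule D[OF _ that])
  have "G x x' = H x x'"
    by (rule eq_on_Dy[OF contG2 contH2]) (rule D1)
  then show ?thesis unfolding G_def H_def .
qed

end


context PL begin

lemma part2:
  assumes F': "real_subring F'" "F \<subseteq> F'"
  shows "\<exists>q. (\<forall>m\<in>elems F \<mu>. q m = p m) \<and>
                 (\<forall>a. continuous_on (Fvec F') (\<lambda>x. q (pinv \<mu> a x))) \<and>
                 (\<forall>a0. \<forall>C\<in>Sigma_chart F \<mu> a0. linear_on_PLcone F' \<mu> q a0 C) \<and>
                 q \<in> Sp F' \<mu>"
proof -
  define c0 :: 'i where "c0 = undefined"
  define q where "q m = q0 c0 (m c0)" for m :: "'i \<Rightarrow> real^'n"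
  have A: "\<forall>m\<in>elems F \<mu>. q m = p m"
  proof
    fix m assume m: "m \<in> elems F \<mu>"
    have "q m = f c0 (m c0)" unfolding q_def using q0_F[OF elems_Fvec[OF m]] .
    also have "\<dots> = p m" unfolding f_def elems_pinv[OF m] ..
    finally show "q m = p m" .
  qed
  have B: "\<forall>a. continuous_on (Fvec F') (\<lambda>x. q (pinv \<mu> a x))"
  proof
    fix a
    have "continuous_on UNIV (\<lambda>x. q0 c0 (\<mu> a c0 x))"
      by (rule continuous_on_compose2[OF q0_cont mu_cont]) simp
    then have "continuous_on (Fvec F') (\<lambda>x. q0 c0 (\<mu> a c0 x))" by (rule continuous_on_subset) simp
    then show "continuous_on (Fvec F') (\<lambda>x. q (pinv \<mu> a x))" unfolding q_def pinv_def .
  qed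
  have qa: "q m = q0 a (m a)" if m: "m \<in> elems F' \<mu>" for m a
  proof -
    have "q m = q0 c0 (\<mu> a c0 (m a))" unfolding q_def using elems_chart[OF m, of c0 a] by simp
    also have "\<dots> = q0 a (m a)" by (rule q0_chart)
    finally show ?thesis .
  qed
  have C: "\<forall>a0. \<forall>C\<in>Sigma_chart F \<mu> a0. linear_on_PLcone F' \<mu> q a0 C"
  proof (intro allI ballI)
    fix a0 C assume C: "C \<in> Sigma_chart F \<mu> a0"
    show "linear_on_PLcone F' \<mu> q a0 C" unfolding linear_on_PLcone_def
    proof
      fix a
      obtain D l A B where dat: "good a0 D" "C \<subseteq> D" "linear l" "\<forall>x\<in>Fvec F. l x \<in> F"
       "\<forall>x\<in>D. x \<in> Fvec F \<longrightarrow> f a0 x = l x" "linear A" "\<forall>x\<in>D. \<mu> a0 a x = A x"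
       "linear B" "\<forall>x\<in>Fvec F. B x \<in> Fvec F" "\<forall>x. B (A x) = x"
        using cone_data[OF C, of a] by blast
      have "Klinear_functional F' (l \<circ> B)"
        by (rule linear_F_F'[OF linear_compose[OF dat(8) dat(3)] _ rsF F']) (use dat(4,9) in auto)
      moreover have "q m = (l \<circ> B) (m a)" if m: "m \<in> elems F' \<mu>" "m a0 \<in> C" for m
      proof -
        have mD: "m a0 \<in> D" using m(2) dat(2) by blast
        have "q m = q0 a0 (m a0)" by (rule qa[OF m(1)])
        also have "\<dots> = l (m a0)" by (rule q0_eq[OF dat(1) dat(3) dat(5) mD])
        also have "\<dots> = l (B (A (m a0)))" using dat(10) by simp
        also have "A (m a0) = m a" using elems_chart[OF m(1), of a a0] dat(7) mD by simp
        finally show ?thesis by simp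
      qed
      ultimately show "\<exists>l. Klinear_functional F' l \<and> (\<forall>m\<in>elems F' \<mu>. m a0 \<in> C \<longrightarrow> q m = l (m a))"
        by blast
    qed
  qed
  have D: "q \<in> Sp F' \<mu>" unfolding Sp_def
  proof (intro CollectI conjI ballI allI impI)
    fix m assume m: "m \<in> elems F' \<mu>"
    show "q m \<in> F'" unfolding q_def by (rule q0_vals[OF elems_Fvec[OF m] F'])
  next
    fix m m' assume m: "m \<in> elems F' \<mu>" and m': "m' \<in> elems F' \<mu>"
    have fe: "(\<lambda>b. q (padd \<mu> b m m')) = (\<lambda>b. q0 c0 (\<mu> b c0 (\<mu> c0 b (m c0) + \<mu> c0 b (m' c0))))"
    proof
      fix b
      have "padd \<mu> b m m' c0 = \<mu> b c0 (m b + m' b)" unfolding padd_def pinv_def ..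
      also have "m b = \<mu> c0 b (m c0)" by (rule elems_chart[OF m])
      also have "m' b = \<mu> c0 b (m' c0)" by (rule elems_chart[OF m'])
      finally show "q (padd \<mu> b m m') = q0 c0 (\<mu> b c0 (\<mu> c0 b (m c0) + \<mu> c0 b (m' c0)))"
        unfolding q_def by simp
    qed
    show "q m + q m' = Min (range (\<lambda>b. q (padd \<mu> b m m')))"
      unfolding fe unfolding q_def by (rule minid)
  next
    fix c m a assume c: "c \<in> F'" "0 \<le> c" and m: "m \<in> elems F' \<mu>"
    have "pscale \<mu> a c m c0 = \<mu> a c0 (c *\<^sub>R m a)" unfolding pscale_def pinv_def ..
    also have "\<dots> = c *\<^sub>R \<mu> a c0 (m a)" by (rule mu_homog[OF c(2)])
    also have "\<mu> a c0 (m a) = m c0" by (rule elems_chart[OF m, symmetric])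
    finally have "pscale \<mu> a c m c0 = c *\<^sub>R m c0" .
    then show "q (pscale \<mu> a c m) = c * q m" unfolding q_def using q0_homog[OF c(2)] by simp
  qed
  show ?thesis using A B C D by blast
qed

end

theorem mainTheorem1:
  fixes F :: "real set"
    and \<mu> :: "'i::finite \<Rightarrow> 'i \<Rightarrow> real^'n \<Rightarrow> real^'n"
    and p :: "('i \<Rightarrow> real^'n) \<Rightarrow> real"
  assumes "polyptych F \<mu>"
    and "p \<in> Sp F \<mu>"
  shows "(\<forall>a0. \<forall>C\<in>Sigma_chart F \<mu> a0. linear_on_PLcone F \<mu> p a0 C) \<and>
         (\<forall>F'. real_subring F' \<and> F \<subseteq> F' \<longrightarrow>
            (\<exists>q. (\<forall>m\<in>elems F \<mu>. q m = p m) \<and>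
                 (\<forall>a. continuous_on (Fvec F') (\<lambda>x. q (pinv \<mu> a x))) \<and>
                 (\<forall>a0. \<forall>C\<in>Sigma_chart F \<mu> a0. linear_on_PLcone F' \<mu> q a0 C) \<and>
                 q \<in> Sp F' \<mu>))"
proof -
  interpret PL F \<mu> p using assms by unfold_locales
  show ?thesis using part1 part2 by blast
qed

end
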